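(* Fix $p\in(0,1)$, $q=1-p$. Let $\nu_n$ be the stationary law of the careless count chain and $\mu_n:=\mathbb P_{\nu_n}(K_0<n,K_1=n)$. Then $\mu_n=\nu_n(n)(1-q^n)$, and equivalently $\mu_n=\nu_n(n-1)\frac{q^n}{n}$.
   Context: The careless count chain $(K_t)$ on $\{0,\dots,n\}$: given $K_t=k$, with probability $k/n$, $K_{t+1}\sim\mathrm{Bin}(k,q)$, and with probability $(n-k)/n$, $K_{t+1}\sim\mathrm{Bin}(k+1,q)$. It is irreducible and aperiodic with unique stationary law $\nu_n$; $\mathbb P_{\nu_n}$ denotes the chain started from $\nu_n$. *)

theory Defs
  imports "HOL-Probability.Probability"
begin

definition careless_trans :: "nat \<Rightarrow> real \<Rightarrow> nat \<Rightarrow> nat \<Rightarrow> real" where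
  "careless_trans n q k j =
     (real k / real n) * pmf (binomial_pmf k q) j
     + (real (n - k) / real n) * pmf (binomial_pmf (k + 1) q) j"

definition careless_stationary :: "nat \<Rightarrow> real \<Rightarrow> (nat \<Rightarrow> real) \<Rightarrow> bool" where
  "careless_stationary n q nu \<longleftrightarrow>
     (\<forall>k. 0 \<le> nu k) \<and> (\<forall>k>n. nu k = 0) \<and> (\<Sum>k\<le>n. nu k) = 1 \<and>
     (\<forall>j\<le>n. nu j = (\<Sum>k\<le>n. nu k * careless_trans n q k j))"

definition careless_mu :: "nat \<Rightarrow> real \<Rightarrow> (nat \<Rightarrow> real) \<Rightarrow> real" where
  "careless_mu n q nu = (\<Sum>k<n. nu k * careless_trans n q k n)"

end

theory Submission
  imports Defs
begin

lemma trans_n: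
  assumes q: "0 \<le> q" "q \<le> 1" and k: "k < n"
  shows "careless_trans n q k n = (if k = n - 1 then q ^ n / real n else 0)"
proof -
  have z1: "pmf (binomial_pmf k q) n = 0" using q k by (simp add: pmf_binomial)
  show ?thesis
  proof (cases "k = n - 1")
    case True
    then have "k + 1 = n" using k by simp
    then show ?thesis using q z1 True unfolding careless_trans_def
      by (simp add: pmf_binomial)
  next
    case False
    then have "k + 1 < n" using k by simp
    then have "pmf (binomial_pmf (k+1) q) n = 0" using q by (simp add: pmf_binomial)
    then show ?thesis using z1 False unfolding careless_trans_def by simp
  qed
qed

theorem mainTheorem15:
  fixes p q :: real and n :: nat and nu :: "nat \<Rightarrow> real"
  assumes "0 < p" "p < 1" "q = 1 - p" "n \<ge> 1"
    and "careless_stationary n q nu"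
  shows "careless_mu n q nu = nu n * (1 - q ^ n) \<and>
         careless_mu n q nu = nu (n - 1) * q ^ n / real n"
proof -
  have q: "0 \<le> q" "q \<le> 1" using assms by auto
  have mu: "careless_mu n q nu = nu (n - 1) * q ^ n / real n"
  proof -
    have "careless_mu n q nu = (\<Sum>k<n. nu k * (if k = n - 1 then q ^ n / real n else 0))"
      unfolding careless_mu_def using trans_n[OF q] by (intro sum.cong) auto
    also have "\<dots> = nu (n - 1) * q ^ n / real n"
      using assms(4) by (simp add: sum.delta' if_distrib cong: if_cong)
    finally show ?thesis .
  qed
  have tnn: "careless_trans n q n n = q ^ n"
    using q assms(4) unfolding careless_trans_def by (simp add: pmf_binomial)
  have st: "nu n = (\<Sum>k\<le>n. nu k * careless_trans n q k n)"
    using assms(5) unfolding careless_stationary_def by auto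
  also have "\<dots> = careless_mu n q nu + nu n * q ^ n"
    unfolding careless_mu_def by (simp add: lessThan_Suc_atMost[symmetric] tnn)
  finally have "careless_mu n q nu = nu n * (1 - q ^ n)" by (simp add: algebra_simps)
  with mu show ?thesis by simp
qed

end
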